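(* Let $0<|a|<M$. Then $$\{\xi_t<0\}\cap\{\xi\cdot v_{\mathcal H}>0\}\cap K=\emptyset,$$ where $K\subset T^*{\rm M}_{\rm I}\setminus o$ is the trapped set.
   Context: ${\rm M}_{\rm I}=\mathbb R_t\times(r_+,\infty)_r\times\mathbb S^2_{\theta,\varphi}$ is the Kerr exterior in Boyer–Lindquist coordinates with $r_+=M+\sqrt{M^2-a^2}$, $\Delta=r^2-2Mr+a^2$, $\rho^2=r^2+a^2\cos^2\theta$, $\sigma^2=(r^2+a^2)^2-a^2\Delta\sin^2\theta$, and metric $g=-(1-\tfrac{2Mr}{\rho^2})dt^2-\tfrac{4aMr\sin^2\theta}{\rho^2}dt\,d\varphi+\tfrac{\rho^2}{\Delta}dr^2+\rho^2d\theta^2+\tfrac{\sigma^2}{\rho^2}\sin^2\theta\,d\varphi^2$. Covectors are $\xi=\xi_tdt+\xi_rdr+\xi_\theta d\theta+\xi_\varphi d\varphi$, $\tilde\xi=(\xi_t,\xi_r,\xi_\varphi,\xi_\theta)$. Set $G_r=\Delta\xi_r^2-\frac1\Delta((r^2+a^2)\xi_t+a\xi_\varphi)^2$, $G_\theta=\xi_\theta^2+\frac1{\sin^2\theta}(a\sin^2\theta\xi_t+\xi_\varphi)^2$, $G=G_r+G_\theta=\rho^{-2}g^{-1}(\xi,\xi)$. The trapped set is $K=\{G=\partial_rG_r=\xi_r=0,\ \tilde\xi\neq0\}$ (with $\partial_r$ taken at fixed $\xi$). The Killing field $v_{\mathcal H}=\partial_t+\Omega_{\mathcal H}\partial_\varphi$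 with $\Omega_{\mathcal H}=a/(r_+^2+a^2)$, so $\xi\cdot v_{\mathcal H}=\xi_t+\Omega_{\mathcal H}\xi_\varphi$ (on the rotation axis $v_{\mathcal H}=\partial_t$ in the regular coordinates $(t,r,x_1,x_2)$, $x_1=\sin\theta\cos\varphi$, $x_2=\sin\theta\sin\varphi$). *)

theory Defs
  imports "HOL-Analysis.Analysis"
begin

text \<open>Kerr exterior quantities in Boyer--Lindquist coordinates.
  Covector components are passed in the order xi_t, xi_r, xi_phi, xi_theta.\<close>

definition r_plus :: "real \<Rightarrow> real \<Rightarrow> real" where
  "r_plus M a = M + sqrt (M\<^sup>2 - a\<^sup>2)"

definition Delta :: "real \<Rightarrow> real \<Rightarrow> real \<Rightarrow> real" where
  "Delta M a r = r\<^sup>2 - 2 * M * r + a\<^sup>2"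

definition Omega_H :: "real \<Rightarrow> real \<Rightarrow> real" where
  "Omega_H M a = a / ((r_plus M a)\<^sup>2 + a\<^sup>2)"

definition G_r :: "real \<Rightarrow> real \<Rightarrow> real \<Rightarrow> real \<Rightarrow> real \<Rightarrow> real \<Rightarrow> real" where
  "G_r M a r xi_t xi_r xi_phi =
     Delta M a r * xi_r\<^sup>2 - ((r\<^sup>2 + a\<^sup>2) * xi_t + a * xi_phi)\<^sup>2 / Delta M a r"

definition G_theta :: "real \<Rightarrow> real \<Rightarrow> real \<Rightarrow> real \<Rightarrow> real \<Rightarrow> real" where
  "G_theta a \<theta> xi_t xi_phi xi_theta =
     xi_theta\<^sup>2 + (a * (sin \<theta>)\<^sup>2 * xi_t + xi_phi)\<^sup>2 / (sin \<theta>)\<^sup>2"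

definition G :: "real \<Rightarrow> real \<Rightarrow> real \<Rightarrow> real \<Rightarrow> real \<Rightarrow> real \<Rightarrow> real \<Rightarrow> real \<Rightarrow> real" where
  "G M a r \<theta> xi_t xi_r xi_phi xi_theta =
     G_r M a r xi_t xi_r xi_phi + G_theta a \<theta> xi_t xi_phi xi_theta"

text \<open>The trapped set K (t and phi play no role, so points are recorded as
  (r, theta, xi_t, xi_r, xi_phi, xi_theta)); off the rotation axis, 0 < theta < pi.\<close>

definition trapped_set :: "real \<Rightarrow> real \<Rightarrow> (real \<times> real \<times> real \<times> real \<times> real \<times> real) set" where
  "trapped_set M a = {(r, \<theta>, xi_t, xi_r, xi_phi, xi_theta).
      r > r_plus M a \<and> 0 < \<theta> \<and> \<theta> < pi \<and>
      G M a r \<theta> xi_t xi_r xi_phi xi_theta = 0 \<and>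
      ((\<lambda>s. G_r M a s xi_t xi_r xi_phi) has_real_derivative 0) (at r) \<and>
      xi_r = 0 \<and>
      (xi_t, xi_r, xi_phi, xi_theta) \<noteq> (0, 0, 0, 0)}"

end

theory Submission
  imports Defs
begin

lemma key:
  fixes M a r t P X s :: real
  assumes s: "s \<ge> 0" and r: "r > M + s" and M: "M > 0"
    and D: "2*r*t*((r-M)^2 - s^2) = X*(r-M)"
    and X: "X = (r^2+a^2)*t + P"
    and Om: "((M+s)^2+a^2)*t + P > 0" and t: "t < 0"
  shows False
proof -
  define u where "u = r - (M+s)"
  have u: "u > 0" using r u_def by linarith
  have rM: "r - M > 0" using r s by linarith
  have e0: "X - (r^2-(M+s)^2)*t = ((M+s)^2+a^2)*t + P" using X by (simp add: algebra_simps)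
  hence h1: "X > (r^2 - (M+s)^2)*t" using Om by linarith
  have h2: "X*(r-M) > ((r^2 - (M+s)^2)*t)*(r-M)" using h1 rM by (rule mult_strict_right_mono)
  have e3: "((r^2 - (M+s)^2)*t)*(r-M) = ((r^2 - (M+s)^2)*(r-M))*t" by (simp only: mult_ac)
  have e4: "2*r*t*((r-M)^2 - s^2) = (2*r*((r-M)^2 - s^2))*t" by (simp only: mult_ac)
  have h3: "(2*r*((r-M)^2 - s^2))*t > ((r^2 - (M+s)^2)*(r-M))*t" using h2 D e3 e4 by linarith
  have h4: "2*r*((r-M)^2 - s^2) < (r^2 - (M+s)^2)*(r-M)" using h3 mult_less_cancel_right_neg[OF t] by blast
  have e1: "(r-M)^2 - s^2 = u * (u + 2 * s)" unfolding u_def by (simp add: power2_eq_square algebra_simps)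
  have e2: "r^2 - (M+s)^2 = u * (u + 2 * (M + s))" unfolding u_def by (simp add: power2_eq_square algebra_simps)
  have h5: "u * (2 * r * (u + 2 * s)) < u * ((u + 2 * (M+s)) * (r-M))"
  proof -
    have A: "2 * r * ((r-M)^2 - s^2) = u * (2 * r * (u + 2 * s))" by (simp only: e1 mult_ac)
    have B: "(r^2 - (M+s)^2) * (r-M) = u * ((u + 2 * (M+s)) * (r-M))" by (simp only: e2 mult_ac)
    show ?thesis using h4 by (simp only: A B)
  qed
  have h6: "2 * r * (u + 2 * s) < (u + 2 * (M+s)) * (r-M)" using h5 mult_less_cancel_left_pos[OF u] by blast
  have rr: "r = u + M + s" unfolding u_def by simp
  have h7: "2 * r * (u + 2 * s) - (u + 2 * (M+s)) * (r-M) = u * u + 3 * (s * u) + 2 * (M * s) + 2 * (s * s)"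
    unfolding rr by (simp add: algebra_simps)
  have "u * u > 0" "s * u \<ge> 0" "M * s \<ge> 0" "s * s \<ge> 0" "u * M > 0" using u s M by auto
  thus False using h6 h7 by linarith
qed

lemma dG:
  assumes "Delta M a r \<noteq> 0"
  shows "((\<lambda>x. G_r M a x t 0 p) has_real_derivative
     (- (2*((r^2+a^2)*t + a*p)*(2*r*t) * Delta M a r - ((r^2+a^2)*t + a*p)^2 * (2*r - 2*M)) / (Delta M a r)^2)) (at r)"
  using assms unfolding G_r_def Delta_def
  apply (intro derivative_eq_intros)
  apply (rule refl)+
  apply simp_all
  apply (simp add: divide_simps)
  apply (simp add: algebra_simps power2_eq_square)
  done

theorem lemma6p5:
  fixes M a :: real
  assumes "0 < \<bar>a\<bar>" and "\<bar>a\<bar> < M"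
  shows "{(r, \<theta>, xi_t, xi_r, xi_phi, xi_theta). xi_t < 0} \<inter>
         {(r, \<theta>, xi_t, xi_r, xi_phi, xi_theta). xi_t + Omega_H M a * xi_phi > 0} \<inter>
         trapped_set M a = {}"
proof (rule ccontr)
  assume "\<not> ?thesis"
  then obtain r \<theta> t xr p xth where
    t: "t < 0" and om: "t + Omega_H M a * p > 0" and
    K: "(r, \<theta>, t, xr, p, xth) \<in> trapped_set M a" by auto
  define s where "s = sqrt (M^2 - a^2)"
  have aM: "a^2 \<le> M^2" proof -
    have "\<bar>a\<bar>^2 \<le> M^2" using assms by (intro power_mono) auto
    thus ?thesis by simp
  qed
  have M: "M > 0" using assms by linarith
  have s0: "s \<ge> 0" unfolding s_def using aM by simp
  have ss: "s^2 = M^2 - a^2" unfolding s_def using aM by simp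
  from K have r: "r > M + s" and th: "0 < \<theta>" "\<theta> < pi" and
    G0: "G M a r \<theta> t xr p xth = 0" and
    der: "((\<lambda>x. G_r M a x t xr p) has_real_derivative 0) (at r)" and xr: "xr = 0"
    unfolding trapped_set_def r_plus_def s_def by auto
  have Deq: "\<And>x. Delta M a x = (x-M)^2 - s^2"
    unfolding Delta_def using ss by (simp add: power2_eq_square algebra_simps)
  have Dpos: "Delta M a r > 0"
  proof -
    have "Delta M a r = (r-(M+s))*(r-(M-s))" unfolding Deq by (simp add: power2_eq_square algebra_simps)
    moreover have "r-(M+s) > 0" "r-(M-s) > 0" using r s0 by linarith+
    ultimately show ?thesis by simp
  qed
  define X where "X = (r^2+a^2)*t + a*p"
  have der2: "((\<lambda>x. G_r M a x t xr p) has_real_derivative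
      (- (2*X*(2*r*t) * Delta M a r - X^2 * (2*r - 2*M)) / (Delta M a r)^2)) (at r)"
    unfolding X_def xr using dG[of M a r t p] Dpos by simp
  have "(- (2*X*(2*r*t) * Delta M a r - X^2 * (2*r - 2*M)) / (Delta M a r)^2) = 0"
    using DERIV_unique[OF der der2] by simp
  hence "2*X*(2*r*t) * Delta M a r = X^2 * (2*r - 2*M)" using Dpos by simp
  hence eqX: "X * (2*r*t * Delta M a r - X*(r-M)) = 0" by (simp add: power2_eq_square algebra_simps)
  have sinpos: "sin \<theta> > 0" using th by (simp add: sin_gt_zero)
  show False
  proof (cases "X = 0")
    case True
    have Gth: "G_theta a \<theta> t p xth = 0" using G0 True xr unfolding G_def G_r_def X_def by simp
    have "(a * (sin \<theta>)^2 * t + p)^2 / (sin \<theta>)^2 \<ge> 0" by simp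
    moreover have "xth^2 \<ge> 0" by simp
    ultimately have "(a * (sin \<theta>)^2 * t + p)^2 / (sin \<theta>)^2 = 0" using Gth unfolding G_theta_def
      by linarith
    hence pe: "p = - a * (sin \<theta>)^2 * t" using sinpos by simp
    have "(r^2 + a^2 - a^2*(sin \<theta>)^2) * t = 0" using True unfolding X_def pe
      by (simp add: algebra_simps power2_eq_square)
    moreover have "r^2 + a^2 - a^2*(sin \<theta>)^2 > 0"
    proof -
      have "(sin \<theta>)^2 \<le> 1" by (simp add: abs_square_le_1)
      hence "a^2*(sin \<theta>)^2 \<le> a^2" by (simp add: mult_left_le)
      moreover have "r^2 > 0" using r s0 M by simp
      ultimately show ?thesis by linarith
    qed
    ultimately show False using t by simp
  next
    case False
    hence D: "2*r*t*((r-M)^2 - s^2) = X*(r-M)" using eqX Deq by simp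
    have den: "(M+s)^2 + a^2 > 0" using assms by (simp add: add_nonneg_pos)
    have "t + a*p/((M+s)^2+a^2) > 0" using om unfolding Omega_H_def r_plus_def s_def by simp
    hence "((M+s)^2+a^2)*(t + a*p/((M+s)^2+a^2)) > 0" using den by (rule mult_pos_pos[rotated])
    moreover have "((M+s)^2+a^2)*(t + a*p/((M+s)^2+a^2)) = ((M+s)^2+a^2)*t + a*p"
      using den by (simp add: distrib_left)
    ultimately have "((M+s)^2+a^2)*t + a*p > 0" by simp
    thus False by (rule key[OF s0 r M D X_def _ t])
  qed
qed

end
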